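(* Let $M\in\overline{ARI}$ be polynomial-valued. Then $swap\big(\overline{ganit}(poc)\cdot M\big)\in ARI^\Delta$.
   Context: $ARI$ (resp. $\overline{ARI}$) is the space of moulds $A=(A^r)_{r\ge0}$ with $A^r\in\mathbb{Q}(u_1,\dots,u_r)$ (resp. $\mathbb{Q}(v_1,\dots,v_r)$) and $A^0=0$. $swap:\overline{ARI}\to ARI$ is $swap(C)(u_1,\dots,u_r)=C(u_1+\dots+u_r,u_1+\dots+u_{r-1},\dots,u_1)$. $ARI^\Delta$ is the set of $A\in ARI$ such that $u_1\cdots u_r(u_1+\dots+u_r)A(u_1,\dots,u_r)$ is a polynomial for every $r\ge1$. $poc(v_1,\dots,v_r)=\frac{1}{v_1(v_1-v_2)\cdots(v_{r-1}-v_r)}$, $poc(\emptyset)=1$. $(\overline{ganit}(Q)\cdot T)(v_1,\dots,v_r)=\sum Q(\lfloor\mathbf b_1)\cdots Q(\lfloor\mathbf b_s)T(\mathbf a_1\cdots\mathbf a_s)$, summed over all decompositions of $(v_1,\dots,v_r)$ into consecutive chunks $\mathbf a_1\mathbf b_1\cdots\mathbf a_s\mathbf b_s$ ($s\ge1$, all nonempty except possibly $\mathbf b_s$), with $\mathbf a_1\cdots\mathbf a_s$ the concatenation, $\lfloor\mathbf b_i=(v_k-v_{k-1},v_{k+1}-v_{k-1},\dots,v_{k+l}-v_{k-1})$ for $\mathbf b_i=(v_k,\dots,v_{k+l})$, and $\lfloor\emptyset=\emptyset$. *)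

theory Defs
  imports Complex_Main
begin

text \<open>A mould component of length r is modelled as a function on rat lists
(the variables u_1..u_r resp. v_1..v_r), a mould as a function rat list \<Rightarrow> rat.\<close>

type_synonym mould = "rat list \<Rightarrow> rat"

definition poly_eval :: "nat \<Rightarrow> ((nat \<Rightarrow> nat) \<Rightarrow> rat) \<Rightarrow> rat list \<Rightarrow> rat" where
  "poly_eval r c us = (\<Sum>\<alpha> \<in> {\<alpha>. c \<alpha> \<noteq> 0}. c \<alpha> * (\<Prod>i<r. (us ! i) ^ (\<alpha> i)))"

definition is_poly_coeffs :: "((nat \<Rightarrow> nat) \<Rightarrow> rat) \<Rightarrow> bool" where
  "is_poly_coeffs c \<longleftrightarrow> finite {\<alpha>. c \<alpha> \<noteq> 0}"

definition polynomial_valued :: "mould \<Rightarrow> bool" where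
  "polynomial_valued M \<longleftrightarrow>
     (\<forall>r. \<exists>c. is_poly_coeffs c \<and> (\<forall>vs. length vs = r \<longrightarrow> M vs = poly_eval r c vs))"

definition poc :: mould where
  "poc vs = (if vs = [] then 1
     else 1 / (hd vs * (\<Prod>i < length vs - 1. (vs ! i - vs ! (i+1)))))"

definition decomps :: "'a list \<Rightarrow> ('a list \<times> 'a list) list set" where
  "decomps vs = {ps. ps \<noteq> [] \<and> concat (map (\<lambda>(a,b). a @ b) ps) = vs
      \<and> (\<forall>(a,b) \<in> set ps. a \<noteq> []) \<and> (\<forall>(a,b) \<in> set (butlast ps). b \<noteq> [])}"

text \<open>Lower floor: the chunk b following the chunk a is shifted by the last
entry of a (the variable v_{k-1} immediately preceding b).\<close>
definition lfloor :: "rat list \<Rightarrow> rat list \<Rightarrow> rat list" where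
  "lfloor a b = map (\<lambda>x. x - last a) b"

definition ganit_bar :: "mould \<Rightarrow> mould \<Rightarrow> mould" where
  "ganit_bar Q T vs = (\<Sum>ps \<in> decomps vs.
      prod_list (map (\<lambda>(a,b). Q (lfloor a b)) ps) * T (concat (map fst ps)))"

definition swap :: "mould \<Rightarrow> mould" where
  "swap C us = C (rev (map (\<lambda>k. sum_list (take k us)) [1..<length us + 1]))"

text \<open>ARI^Delta: A^0 = 0 and for each r \<ge> 1, u_1...u_r (u_1+...+u_r) A(u) is a
polynomial (as rational functions, i.e. agreeing with a polynomial off the
hyperplanes u_i = 0, u_1+...+u_r = 0).\<close>
definition ARI_Delta :: "mould \<Rightarrow> bool" where
  "ARI_Delta A \<longleftrightarrow> A [] = 0 \<and>
     (\<forall>r\<ge>1. \<exists>c. is_poly_coeffs c \<and>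
        (\<forall>us. length us = r \<and> (\<forall>x\<in>set us. x \<noteq> 0) \<and> sum_list us \<noteq> 0 \<longrightarrow>
           prod_list us * sum_list us * A us = poly_eval r c us))"

end

theory Submission
  imports Defs
begin

definition mon :: "nat \<Rightarrow> (nat \<Rightarrow> nat) \<Rightarrow> rat list \<Rightarrow> rat" where
  "mon r \<alpha> us = (\<Prod>i<r. (us ! i) ^ (\<alpha> i))"

definition pf :: "nat \<Rightarrow> (rat list \<Rightarrow> rat) \<Rightarrow> bool" where
  "pf r f \<longleftrightarrow> (\<exists>c. is_poly_coeffs c \<and> (\<forall>us. length us = r \<longrightarrow> f us = poly_eval r c us))"

lemma poly_eval_sup:
  assumes "finite S" "{\<alpha>. c \<alpha> \<noteq> 0} \<subseteq> S"
  shows "poly_eval r c us = (\<Sum>\<alpha>\<in>S. c \<alpha> * mon r \<alpha> us)"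
  unfolding poly_eval_def mon_def
  by (rule sum.mono_neutral_left) (use assms in auto)

lemma pf_const: "pf r (\<lambda>_. k)"
proof -
  define c where "c = (\<lambda>\<alpha>::nat\<Rightarrow>nat. if \<alpha> = (\<lambda>_. 0) then k else 0)"
  have fin: "{\<alpha>. c \<alpha> \<noteq> 0} \<subseteq> {\<lambda>_. 0}" by (auto simp: c_def split: if_splits)
  have "poly_eval r c us = k" for us
    by (subst poly_eval_sup[OF _ fin]) (auto simp: c_def mon_def)
  moreover have "is_poly_coeffs c" using fin unfolding is_poly_coeffs_def
    by (meson finite.emptyI finite_insert finite_subset)
  ultimately show ?thesis unfolding pf_def by metis
qed

lemma pf_var:
  assumes "i < r" shows "pf r (\<lambda>us. us ! i)"
proof -
  define e where "e = (\<lambda>j::nat. if j = i then 1 else (0::nat))"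
  define c where "c = (\<lambda>\<alpha>::nat\<Rightarrow>nat. if \<alpha> = e then 1 else (0::rat))"
  have fin: "{\<alpha>. c \<alpha> \<noteq> 0} \<subseteq> {e}" by (auto simp: c_def split: if_splits)
  have m: "mon r e us = us ! i" for us
  proof -
    have "mon r e us = (\<Prod>j\<in>{..<r}. if j = i then us ! i else 1)"
      unfolding mon_def e_def by (rule prod.cong) auto
    also have "\<dots> = us ! i" using assms by (subst prod.delta) auto
    finally show ?thesis .
  qed
  have "poly_eval r c us = us ! i" for us
    by (subst poly_eval_sup[OF _ fin]) (auto simp: c_def m)
  moreover have "is_poly_coeffs c" using fin unfolding is_poly_coeffs_def
    by (meson finite.emptyI finite_insert finite_subset)
  ultimately show ?thesis unfolding pf_def by metis
qed

lemma pf_add: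
  assumes "pf r f" "pf r g" shows "pf r (\<lambda>us. f us + g us)"
proof -
  obtain c1 where c1: "is_poly_coeffs c1" "\<And>us. length us = r \<Longrightarrow> f us = poly_eval r c1 us"
    using assms(1) unfolding pf_def by blast
  obtain c2 where c2: "is_poly_coeffs c2" "\<And>us. length us = r \<Longrightarrow> g us = poly_eval r c2 us"
    using assms(2) unfolding pf_def by blast
  define S where "S = {\<alpha>. c1 \<alpha> \<noteq> 0} \<union> {\<alpha>. c2 \<alpha> \<noteq> 0}"
  have finS: "finite S" using c1(1) c2(1) unfolding S_def is_poly_coeffs_def by auto
  define c where "c = (\<lambda>\<alpha>. c1 \<alpha> + c2 \<alpha>)"
  have sub: "{\<alpha>. c \<alpha> \<noteq> 0} \<subseteq> S" "{\<alpha>. c1 \<alpha> \<noteq> 0} \<subseteq> S" "{\<alpha>. c2 \<alpha> \<noteq> 0} \<subseteq> S"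
    unfolding S_def c_def by auto
  have "is_poly_coeffs c" using finS sub(1) unfolding is_poly_coeffs_def by (rule finite_subset[rotated])
  moreover have "f us + g us = poly_eval r c us" if "length us = r" for us
  proof -
    have "poly_eval r c us = (\<Sum>\<alpha>\<in>S. c1 \<alpha> * mon r \<alpha> us + c2 \<alpha> * mon r \<alpha> us)"
    proof -
      have "poly_eval r c us = (\<Sum>\<alpha>\<in>S. c \<alpha> * mon r \<alpha> us)" by (rule poly_eval_sup[OF finS sub(1)])
      then show ?thesis by (simp add: c_def distrib_right)
    qed
    also have "\<dots> = poly_eval r c1 us + poly_eval r c2 us"
      by (simp add: sum.distrib poly_eval_sup[OF finS sub(2)] poly_eval_sup[OF finS sub(3)])
    finally show ?thesis using that c1(2) c2(2) by simp
  qed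
  ultimately show ?thesis unfolding pf_def by blast
qed

lemma mon_add: "mon r (\<lambda>j. a j + b j) us = mon r a us * mon r b us"
  unfolding mon_def by (simp add: power_add prod.distrib)

lemma pf_mult:
  assumes "pf r f" "pf r g" shows "pf r (\<lambda>us. f us * g us)"
proof -
  obtain c1 where c1: "is_poly_coeffs c1" "\<And>us. length us = r \<Longrightarrow> f us = poly_eval r c1 us"
    using assms(1) unfolding pf_def by blast
  obtain c2 where c2: "is_poly_coeffs c2" "\<And>us. length us = r \<Longrightarrow> g us = poly_eval r c2 us"
    using assms(2) unfolding pf_def by blast
  define S1 where "S1 = {\<alpha>. c1 \<alpha> \<noteq> 0}"
  define S2 where "S2 = {\<alpha>. c2 \<alpha> \<noteq> 0}"
  have f1: "finite S1" "finite S2" using c1(1) c2(1) unfolding S1_def S2_def is_poly_coeffs_def by auto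
  define pl where "pl = (\<lambda>p::(nat\<Rightarrow>nat)\<times>(nat\<Rightarrow>nat). (\<lambda>j. fst p j + snd p j))"
  define T where "T = pl ` (S1 \<times> S2)"
  have fT: "finite T" unfolding T_def using f1 by auto
  define c where "c = (\<lambda>\<alpha>. \<Sum>p\<in>S1\<times>S2. if pl p = \<alpha> then c1 (fst p) * c2 (snd p) else 0)"
  have sub: "{\<alpha>. c \<alpha> \<noteq> 0} \<subseteq> T"
  proof
    fix \<alpha> assume "\<alpha> \<in> {\<alpha>. c \<alpha> \<noteq> 0}"
    then have "c \<alpha> \<noteq> 0" by simp
    then obtain p where "p \<in> S1 \<times> S2" "(if pl p = \<alpha> then c1 (fst p) * c2 (snd p) else 0) \<noteq> 0"
      unfolding c_def by (rule sum.not_neutral_contains_not_neutral)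
    then have "p \<in> S1 \<times> S2" "pl p = \<alpha>" by (auto split: if_splits)
    then show "\<alpha> \<in> T" unfolding T_def by auto
  qed
  have "is_poly_coeffs c" using fT sub unfolding is_poly_coeffs_def by (rule finite_subset[rotated])
  moreover have "f us * g us = poly_eval r c us" if "length us = r" for us
  proof -
    have "poly_eval r c us = (\<Sum>\<alpha>\<in>T. c \<alpha> * mon r \<alpha> us)" by (rule poly_eval_sup[OF fT sub])
    also have "\<dots> = (\<Sum>\<alpha>\<in>T. \<Sum>p\<in>S1\<times>S2. if pl p = \<alpha> then c1 (fst p) * c2 (snd p) * mon r \<alpha> us else 0)"
      unfolding c_def sum_distrib_right by (intro sum.cong) auto
    also have "\<dots> = (\<Sum>p\<in>S1\<times>S2. \<Sum>\<alpha>\<in>T. if pl p = \<alpha> then c1 (fst p) * c2 (snd p) * mon r \<alpha> us else 0)"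
      by (rule sum.swap)
    also have "\<dots> = (\<Sum>p\<in>S1\<times>S2. c1 (fst p) * c2 (snd p) * mon r (pl p) us)"
      by (intro sum.cong refl) (use fT in \<open>auto simp: T_def\<close>)
    also have "\<dots> = (\<Sum>p\<in>S1\<times>S2. (c1 (fst p) * mon r (fst p) us) * (c2 (snd p) * mon r (snd p) us))"
      by (intro sum.cong refl) (simp add: pl_def mon_add)
    also have "\<dots> = (\<Sum>a\<in>S1. c1 a * mon r a us) * (\<Sum>b\<in>S2. c2 b * mon r b us)"
      by (simp add: sum_product sum.cartesian_product split_beta)
    also have "\<dots> = f us * g us"
      using that c1(2) c2(2) poly_eval_sup[OF f1(1), of c1] poly_eval_sup[OF f1(2), of c2]
      unfolding S1_def S2_def by simp
    finally show ?thesis by simp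
  qed
  ultimately show ?thesis unfolding pf_def by blast
qed

lemma pf_sum:
  assumes "finite A" "\<And>a. a \<in> A \<Longrightarrow> pf r (g a)"
  shows "pf r (\<lambda>us. \<Sum>a\<in>A. g a us)"
  using assms by (induction A rule: finite_induct) (auto intro: pf_const pf_add)

lemma pf_prod:
  assumes "finite A" "\<And>a. a \<in> A \<Longrightarrow> pf r (g a)"
  shows "pf r (\<lambda>us. \<Prod>a\<in>A. g a us)"
  using assms by (induction A rule: finite_induct) (auto intro: pf_const pf_mult)

lemma pf_power:
  assumes "pf r f" shows "pf r (\<lambda>us. f us ^ n)"
  by (induction n) (auto intro: pf_const pf_mult assms)

lemma pf_compose:
  assumes "pf m f" "\<And>j. j < m \<Longrightarrow> pf r (g j)"
  shows "pf r (\<lambda>us. f (map (\<lambda>j. g j us) [0..<m]))"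
proof -
  obtain c where c: "is_poly_coeffs c" "\<And>vs. length vs = m \<Longrightarrow> f vs = poly_eval m c vs"
    using assms(1) unfolding pf_def by blast
  have fin: "finite {\<alpha>. c \<alpha> \<noteq> 0}" using c(1) unfolding is_poly_coeffs_def .
  have eq: "f (map (\<lambda>j. g j us) [0..<m]) = (\<Sum>\<alpha>\<in>{\<alpha>. c \<alpha> \<noteq> 0}. c \<alpha> * (\<Prod>i<m. (g i us) ^ (\<alpha> i)))" for us
    by (simp add: c(2) poly_eval_def)
  have "pf r (\<lambda>us. \<Sum>\<alpha>\<in>{\<alpha>. c \<alpha> \<noteq> 0}. c \<alpha> * (\<Prod>i<m. (g i us) ^ (\<alpha> i)))"
    by (intro pf_sum fin pf_mult pf_const pf_prod pf_power assms(2)) auto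
  then show ?thesis by (simp add: eq)
qed


fun cut :: "(nat \<times> nat) list \<Rightarrow> 'a list \<Rightarrow> ('a list \<times> 'a list) list" where
  "cut [] xs = []"
| "cut ((i,j)#sh) xs = (take i xs, take j (drop i xs)) # cut sh (drop (i+j) xs)"

definition shape :: "('a list \<times> 'a list) list \<Rightarrow> (nat \<times> nat) list" where
  "shape ps = map (\<lambda>(a,b). (length a, length b)) ps"

definition tot :: "(nat \<times> nat) list \<Rightarrow> nat" where
  "tot sh = sum_list (map (\<lambda>(i,j). i+j) sh)"

definition Sh :: "nat \<Rightarrow> (nat \<times> nat) list set" where
  "Sh n = {sh. sh \<noteq> [] \<and> tot sh = n \<and> (\<forall>(i,j)\<in>set sh. 0<i) \<and> (\<forall>(i,j)\<in>set (butlast sh). 0<j)}"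

lemma tot_simps [simp]: "tot [] = 0" "tot ((i,j)#sh) = i + j + tot sh"
  by (simp_all add: tot_def)

lemma shape_simps [simp]: "shape [] = []" "shape ((a,b)#ps) = (length a, length b) # shape ps"
  by (simp_all add: shape_def)

lemma shape_cut: "tot sh \<le> length xs \<Longrightarrow> shape (cut sh xs) = sh"
  by (induction sh arbitrary: xs) auto

lemma take_drop_app: "take j (drop i xs) @ drop (i+j) xs = drop i xs"
  by (metis append_take_drop_id drop_drop add.commute)

lemma concat_cut: "tot sh = length xs \<Longrightarrow> concat (map (\<lambda>(a,b). a@b) (cut sh xs)) = xs"
proof (induction sh arbitrary: xs)
  case Nil then show ?case by simp
next
  case (Cons p sh)
  obtain i j where p: "p = (i,j)" by (cases p)
  have "concat (map (\<lambda>(a,b). a@b) (cut sh (drop (i+j) xs))) = drop (i+j) xs"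
    using Cons by (auto simp: p)
  then show ?case by (simp add: p take_drop_app)
qed

lemma cut_shape: "cut (shape ps) (concat (map (\<lambda>(a,b). a@b) ps)) = ps"
  by (induction ps) auto

lemma tot_shape: "tot (shape ps) = length (concat (map (\<lambda>(a,b). a@b) ps))"
  by (induction ps) auto

lemma length_le_tot: "\<forall>(i,j)\<in>set sh. 0<i \<Longrightarrow> length sh \<le> tot sh"
  by (induction sh) auto

lemma mem_le_tot: "(i,j) \<in> set sh \<Longrightarrow> i + j \<le> tot sh"
  by (induction sh) auto

lemma finite_Sh: "finite (Sh n)"
proof -
  have "Sh n \<subseteq> {sh. set sh \<subseteq> {0..n}\<times>{0..n} \<and> length sh \<le> n}"
  proof
    fix sh assume "sh \<in> Sh n"
    then have t: "tot sh = n" "\<forall>(i,j)\<in>set sh. 0<i" unfolding Sh_def by auto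
    have "length sh \<le> n" using length_le_tot[OF t(2)] t(1) by simp
    moreover have "set sh \<subseteq> {0..n}\<times>{0..n}"
    proof
      fix p assume p: "p \<in> set sh"
      obtain i j where "p = (i,j)" by (cases p)
      then show "p \<in> {0..n}\<times>{0..n}" using mem_le_tot[of i j sh] p t(1) by auto
    qed
    ultimately show "sh \<in> {sh. set sh \<subseteq> {0..n}\<times>{0..n} \<and> length sh \<le> n}" by simp
  qed
  moreover have "finite {sh. set sh \<subseteq> {0..n}\<times>{0..n} \<and> length sh \<le> n}"
    by (rule finite_lists_length_le) auto
  ultimately show ?thesis by (rule finite_subset)
qed

lemma decomps_eq: "decomps xs = (\<lambda>sh. cut sh xs) ` Sh (length xs)"
proof
  show "decomps xs \<subseteq> (\<lambda>sh. cut sh xs) ` Sh (length xs)"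
  proof
    fix ps assume ps: "ps \<in> decomps xs"
    then have c: "concat (map (\<lambda>(a,b). a@b) ps) = xs" unfolding decomps_def by simp
    have "ps = cut (shape ps) xs" using cut_shape[of ps] c by simp
    moreover have "shape ps \<in> Sh (length xs)"
      using ps tot_shape[of ps] c unfolding decomps_def Sh_def shape_def
      by (auto simp: map_butlast[symmetric])
    ultimately show "ps \<in> (\<lambda>sh. cut sh xs) ` Sh (length xs)" by blast
  qed
next
  show "(\<lambda>sh. cut sh xs) ` Sh (length xs) \<subseteq> decomps xs"
  proof
    fix ps assume "ps \<in> (\<lambda>sh. cut sh xs) ` Sh (length xs)"
    then obtain sh where sh: "sh \<in> Sh (length xs)" and ps: "ps = cut sh xs" by blast
    have "tot sh = length xs" using sh unfolding Sh_def by auto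
    then have s: "shape ps = sh" using ps by (metis order_refl shape_cut)
    have "ps \<noteq> []" using s sh unfolding Sh_def by auto
    moreover have "concat (map (\<lambda>(a,b). a@b) ps) = xs" using concat_cut sh ps unfolding Sh_def by auto
    moreover have "\<forall>(a,b)\<in>set ps. a \<noteq> []"
    proof
      fix x assume "x \<in> set ps"
      then have "(length (fst x), length (snd x)) \<in> set sh" using s unfolding shape_def by force
      then show "case x of (a,b) \<Rightarrow> a \<noteq> []" using sh unfolding Sh_def by (auto split: prod.splits)
    qed
    moreover have "\<forall>(a,b)\<in>set (butlast ps). b \<noteq> []"
    proof
      fix x assume "x \<in> set (butlast ps)"
      then have "(length (fst x), length (snd x)) \<in> set (butlast sh)" using s unfolding shape_def
        by (force simp: map_butlast[symmetric])
      then show "case x of (a,b) \<Rightarrow> b \<noteq> []" using sh unfolding Sh_def by (auto split: prod.splits)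
    qed
    ultimately show "ps \<in> decomps xs" unfolding decomps_def by blast
  qed
qed

lemma inj_cut: "inj_on (\<lambda>sh. cut sh xs) (Sh (length xs))"
proof (rule inj_onI)
  fix s1 s2 assume a: "s1 \<in> Sh (length xs)" "s2 \<in> Sh (length xs)" "cut s1 xs = cut s2 xs"
  have t1: "tot s1 \<le> length xs" using a(1) unfolding Sh_def by simp
  have t2: "tot s2 \<le> length xs" using a(2) unfolding Sh_def by simp
  have "s1 = shape (cut s1 xs)" by (rule shape_cut[OF t1, symmetric])
  also have "\<dots> = shape (cut s2 xs)" by (simp only: a(3))
  also have "\<dots> = s2" by (rule shape_cut[OF t2])
  finally show "s1 = s2" .
qed

definition d :: "rat list \<Rightarrow> nat \<Rightarrow> rat" where
  "d xs k = xs ! k - xs ! Suc k"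

lemma take_as_map: "i \<le> length xs \<Longrightarrow> take i xs = map ((!) xs) [0..<i]"
  by (rule nth_equalityI) auto

lemma fst_idx: "\<exists>idx. set idx \<subseteq> {..<tot sh} \<and>
   (\<forall>xs::rat list. length xs = tot sh \<longrightarrow> concat (map fst (cut sh xs)) = map ((!) xs) idx)"
proof (induction sh)
  case Nil then show ?case by auto
next
  case (Cons p sh)
  obtain i j where p: "p = (i,j)" by (cases p)
  from Cons.IH obtain idx where idx1: "set idx \<subseteq> {..<tot sh}"
    and idx2': "\<forall>xs::rat list. length xs = tot sh \<longrightarrow> concat (map fst (cut sh xs)) = map ((!) xs) idx"
    by (elim exE conjE) (rule that, assumption+)
  note idx = idx1 idx2'[rule_format]
  define idx2 where "idx2 = [0..<i] @ map (\<lambda>k. i+j+k) idx"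
  have "set idx2 \<subseteq> {..<tot (p#sh)}" using idx(1) by (auto simp: idx2_def p)
  moreover have "concat (map fst (cut (p#sh) xs)) = map ((!) xs) idx2" if "length xs = tot (p#sh)" for xs :: "rat list"
  proof -
    have l: "length (drop (i+j) xs) = tot sh" using that by (simp add: p)
    have "map ((!) (drop (i+j) xs)) idx = map (\<lambda>k. xs ! (i+j+k)) idx"
      using idx(1) that by (intro map_cong refl) (auto simp: p)
    moreover have "take i xs = map ((!) xs) [0..<i]" using that by (intro take_as_map) (simp add: p)
    ultimately show ?thesis using idx(2)[OF l]
      by (simp only: p idx2_def cut.simps list.map prod.sel concat.simps map_append map_map o_def)
  qed
  ultimately show ?case by (intro exI[of _ idx2]) auto
qed

lemma prod_shift: "(\<Prod>t<(n::nat). f (a+t)) = (\<Prod>k\<in>{a..<a+n}. (f k :: rat))"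
  by (induction n) (auto simp: prod.atLeastLessThan_Suc)

lemma first_chunk:
  assumes "0 < i" "i + j \<le> length xs"
  shows "poc (lfloor (take i xs) (take j (drop i xs))) =
     (if j = 0 then 1 else -1) / (\<Prod>k\<in>{i-1..<i-1+j}. d xs k)"
proof (cases j)
  case 0 then show ?thesis by (simp add: lfloor_def poc_def)
next
  case (Suc j0)
  obtain i0 where i: "i = Suc i0" using assms(1) by (cases i) auto
  define b where "b = lfloor (take i xs) (take j (drop i xs))"
  have lb: "length b = j" using assms by (simp add: b_def lfloor_def)
  have la: "last (take i xs) = xs ! i0" using assms i
    by (simp add: take_Suc_conv_app_nth)
  have bn: "t < j \<Longrightarrow> b ! t = xs ! (i+t) - xs ! i0" for t
    using assms by (simp add: b_def lfloor_def la)
  have "b \<noteq> []" using lb Suc by auto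
  have hb: "hd b = xs ! i - xs ! i0" using bn[of 0] Suc \<open>b \<noteq> []\<close> by (simp add: hd_conv_nth)
  have "(\<Prod>t<length b - 1. b ! t - b ! (t+1)) = (\<Prod>t<j0. d xs (i+t))"
    using lb Suc by (intro prod.cong refl) (auto simp: bn d_def)
  also have "\<dots> = (\<Prod>k\<in>{i..<i+j0}. d xs k)" by (rule prod_shift)
  finally have pb: "(\<Prod>t<length b - 1. b ! t - b ! (t+1)) = (\<Prod>k\<in>{i..<i+j0}. d xs k)" .
  have e: "{i-1..<i-1+j} = insert i0 {i..<i+j0}" using i Suc by auto
  have pr: "(\<Prod>k\<in>{i-1..<i-1+j}. d xs k) = d xs i0 * (\<Prod>k\<in>{i..<i+j0}. d xs k)"
    unfolding e by (subst prod.insert) (auto simp: i)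
  have dd: "d xs i0 = - (xs ! i - xs ! i0)" using i by (simp add: d_def)
  have "poc b = 1 / (hd b * (\<Prod>t<length b - 1. b ! t - b ! (t+1)))"
    using \<open>b \<noteq> []\<close> by (simp add: poc_def)
  then have pb2: "poc b = 1 / ((xs ! i - xs ! i0) * (\<Prod>k\<in>{i..<i+j0}. d xs k))"
    by (simp only: hb pb)
  have na: "(-1::rat) / ((- D) * P) = 1 / (D * P)" for D P by simp
  have j1: "(if j = 0 then 1 else -1::rat) = -1" using Suc by simp
  have "poc (lfloor (take i xs) (take j (drop i xs))) = poc b" by (simp only: b_def)
  also have "\<dots> = 1 / ((xs ! i - xs ! i0) * (\<Prod>k\<in>{i..<i+j0}. d xs k))" by (rule pb2)
  also have "\<dots> = (-1) / ((- (xs ! i - xs ! i0)) * (\<Prod>k\<in>{i..<i+j0}. d xs k))" by (rule na[symmetric])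
  also have "\<dots> = (if j = 0 then 1 else -1) / (\<Prod>k\<in>{i-1..<i-1+j}. d xs k)"
    by (simp only: pr dd j1)
  finally show ?thesis .
qed


lemma poc_prod:
  assumes "\<forall>(i,j)\<in>set sh. 0<i"
  shows "\<exists>s K. K \<subseteq> {..<tot sh - 1} \<and> (\<forall>xs::rat list. length xs = tot sh \<longrightarrow>
     prod_list (map (\<lambda>(a,b). poc (lfloor a b)) (cut sh xs)) = s / (\<Prod>k\<in>K. d xs k))"
  using assms
proof (induction sh)
  case Nil
  show ?case by (intro exI[of _ 1] exI[of _ "{}"]) simp
next
  case (Cons p sh)
  obtain i j where p: "p = (i,j)" by (cases p)
  have i0: "0 < i" using Cons.prems p by auto
  from Cons.IH Cons.prems obtain s K where K1: "K \<subseteq> {..<tot sh - 1}"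
    and K2: "\<forall>xs::rat list. length xs = tot sh \<longrightarrow>
     prod_list (map (\<lambda>(a,b). poc (lfloor a b)) (cut sh xs)) = s / (\<Prod>k\<in>K. d xs k)"
    by auto
  define c1 :: rat where "c1 = (if j = 0 then 1 else -1)"
  define K0 where "K0 = {i-1..<i-1+j}"
  define Ks where "Ks = (\<lambda>k. k + (i+j)) ` K"
  have finK: "finite K" using K1 finite_subset by blast
  have disj: "K0 \<inter> Ks = {}" unfolding K0_def Ks_def using i0 by auto
  have sub: "K0 \<union> Ks \<subseteq> {..<tot (p#sh) - 1}"
    using K1 i0 unfolding K0_def Ks_def p by auto
  have "prod_list (map (\<lambda>(a,b). poc (lfloor a b)) (cut (p#sh) xs)) = (c1 * s) / (\<Prod>k\<in>K0 \<union> Ks. d xs k)"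
    if len: "length xs = tot (p#sh)" for xs :: "rat list"
  proof -
    have l1: "i + j \<le> length xs" using len p by simp
    have l2: "length (drop (i+j) xs) = tot sh" using len p by simp
    have fc: "poc (lfloor (take i xs) (take j (drop i xs))) = c1 / (\<Prod>k\<in>K0. d xs k)"
      unfolding c1_def K0_def by (rule first_chunk[OF i0 l1])
    have "(\<Prod>k\<in>K. d (drop (i+j) xs) k) = (\<Prod>k\<in>K. d xs (k + (i+j)))"
      using l1 by (intro prod.cong refl) (simp add: d_def add.commute)
    also have "\<dots> = (\<Prod>k\<in>Ks. d xs k)" unfolding Ks_def
      by (subst prod.reindex) (auto simp: inj_on_def)
    finally have rest: "prod_list (map (\<lambda>(a,b). poc (lfloor a b)) (cut sh (drop (i+j) xs))) = s / (\<Prod>k\<in>Ks. d xs k)"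
      using K2 l2 by simp
    have "prod_list (map (\<lambda>(a,b). poc (lfloor a b)) (cut (p#sh) xs)) =
        poc (lfloor (take i xs) (take j (drop i xs))) * prod_list (map (\<lambda>(a,b). poc (lfloor a b)) (cut sh (drop (i+j) xs)))"
      by (simp add: p)
    also have "\<dots> = (c1 / (\<Prod>k\<in>K0. d xs k)) * (s / (\<Prod>k\<in>Ks. d xs k))" by (simp only: fc rest)
    also have "\<dots> = (c1 * s) / ((\<Prod>k\<in>K0. d xs k) * (\<Prod>k\<in>Ks. d xs k))" by (rule times_divide_times_eq)
    also have "(\<Prod>k\<in>K0. d xs k) * (\<Prod>k\<in>Ks. d xs k) = (\<Prod>k\<in>K0 \<union> Ks. d xs k)"
      using disj finK unfolding K0_def Ks_def by (intro prod.union_disjoint[symmetric]) auto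
    finally show ?thesis .
  qed
  then show ?case using sub by (intro exI[of _ "c1 * s"] exI[of _ "K0 \<union> Ks"]) auto
qed

definition V :: "rat list \<Rightarrow> rat list" where
  "V us = rev (map (\<lambda>k. sum_list (take k us)) [1..<length us + 1])"

lemma swap_V: "swap C us = C (V us)"
  by (simp add: swap_def V_def)

lemma V_len [simp]: "length (V us) = length us"
  unfolding V_def by (simp only: length_rev length_map length_upt)

lemma V_nth: "k < length us \<Longrightarrow> V us ! k = sum_list (take (length us - k) us)"
proof -
  assume k: "k < length us"
  have e: "[Suc 0..<Suc (length us)] ! (length us - Suc k) = length us - k" using k by (subst nth_upt) auto
  show ?thesis using k by (simp add: V_def rev_nth del: upt_Suc, subst nth_upt, simp_all add: Suc_diff_Suc)
qed

lemma sum_take: "m \<le> length us \<Longrightarrow> sum_list (take m (us::rat list)) = (\<Sum>i<m. us ! i)"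
  by (simp add: sum_list_sum_nth atLeast0LessThan min_def)

lemma V_d: "Suc k < length us \<Longrightarrow> d (V us) k = us ! (length us - Suc k)"
proof -
  assume a: "Suc k < length us"
  have e: "length us - k = Suc (length us - Suc k)" using a by simp
  have "take (length us - k) us = take (length us - Suc k) us @ [us ! (length us - Suc k)]"
    unfolding e using a by (simp add: take_Suc_conv_app_nth)
  then show ?thesis using a by (simp add: d_def V_nth)
qed

lemma prod_list_nth: "prod_list (us::rat list) = (\<Prod>i<length us. us ! i)"
  by (induction us) (simp_all add: prod.lessThan_Suc_shift del: prod.lessThan_Suc)

lemma prod_list_rev_form:
  assumes "length us = Suc m"
  shows "prod_list (us::rat list) = us ! 0 * (\<Prod>k<m. us ! (length us - Suc k))"
proof -
  obtain u rest where us: "us = u # rest" using assms by (cases us) auto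
  have lr: "length rest = m" using assms us by simp
  have "(\<Prod>k<m. us ! (length us - Suc k)) = (\<Prod>k\<in>{0..<m}. rest ! (m + 0 - Suc k))"
    unfolding atLeast0LessThan using lr us by (intro prod.cong refl) (simp add: Suc_diff_Suc)
  also have "\<dots> = (\<Prod>k\<in>{0..<m}. rest ! k)" by (rule prod.atLeastLessThan_rev[symmetric])
  finally show ?thesis using us lr
    by (simp add: prod_list_nth atLeast0LessThan prod.lessThan_Suc_shift del: prod.lessThan_Suc)
qed

lemma pf_cong: "pf r f \<Longrightarrow> (\<And>us. length us = r \<Longrightarrow> f us = g us) \<Longrightarrow> pf r g"
  unfolding pf_def by metis

lemma pf_V: "k < n \<Longrightarrow> pf n (\<lambda>us. V us ! k)"
proof -
  assume k: "k < n"
  have "pf n (\<lambda>us. \<Sum>i<n-k. us ! i)" by (intro pf_sum pf_var) auto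
  then show ?thesis by (rule pf_cong) (use k in \<open>simp add: V_nth sum_take\<close>)
qed


lemma map_idx: "map f idx = map (\<lambda>j. f (idx ! j)) [0..<length idx]"
  by (rule nth_equalityI) auto

lemma alg_aux: "(PK::rat) \<noteq> 0 \<Longrightarrow> (a * (R * PK)) * S * ((s / PK) * X) = s * a * R * S * X"
  by (simp add: field_simps)

lemma shape_term:
  assumes M: "polynomial_valued M" and sh: "sh \<in> Sh n"
  shows "\<exists>g. pf n g \<and> (\<forall>us. length us = n \<and> (\<forall>x\<in>set us. x \<noteq> 0) \<longrightarrow>
     prod_list us * sum_list us *
       (prod_list (map (\<lambda>(a,b). poc (lfloor a b)) (cut sh (V us))) * M (concat (map fst (cut sh (V us)))))
     = g us)"
proof -
  have tn: "tot sh = n" and pos: "\<forall>(i,j)\<in>set sh. 0<i" and ne: "sh \<noteq> []" using sh unfolding Sh_def by auto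
  from fst_idx[of sh] obtain idx where idx1: "set idx \<subseteq> {..<tot sh}"
    and idx2: "\<forall>xs::rat list. length xs = tot sh \<longrightarrow> concat (map fst (cut sh xs)) = map ((!) xs) idx"
    by (elim exE conjE) (rule that, assumption+)
  from poc_prod[OF pos] obtain s K where K1: "K \<subseteq> {..<tot sh - 1}"
    and K2: "\<forall>xs::rat list. length xs = tot sh \<longrightarrow>
     prod_list (map (\<lambda>(a,b). poc (lfloor a b)) (cut sh xs)) = s / (\<Prod>k\<in>K. d xs k)"
    by (elim exE conjE) (rule that, assumption+)
  have "length sh \<le> tot sh" by (rule length_le_tot[OF pos])
  then obtain m where nm: "n = Suc m" using ne tn by (cases n) auto
  have Km: "K \<subseteq> {..<m}" using K1 tn nm by simp
  have finK: "finite K" using Km finite_subset by blast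
  define g where "g us = s * us ! 0 * (\<Prod>k\<in>{..<m}-K. us ! (n - Suc k)) * sum_list us *
      M (map ((!) (V us)) idx)" for us
  have pfM: "pf n (\<lambda>us. M (map ((!) (V us)) idx))"
  proof -
    have pM: "pf (length idx) M" using M unfolding polynomial_valued_def pf_def by blast
    have "pf n (\<lambda>us. M (map (\<lambda>j. V us ! (idx ! j)) [0..<length idx]))"
    proof (rule pf_compose[OF pM])
      fix j assume "j < length idx"
      then have "idx ! j < n" using idx1 tn nth_mem by fastforce
      then show "pf n (\<lambda>us. V us ! (idx ! j))" by (rule pf_V)
    qed
    then show ?thesis by (rule pf_cong) (simp add: map_idx[of "(!) (V _)" idx])
  qed
  have pfS: "pf n (\<lambda>us. sum_list us)"
  proof -
    have "pf n (\<lambda>us. \<Sum>i<n. us ! i)" by (intro pf_sum pf_var) auto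
    then show ?thesis by (rule pf_cong) (metis order_refl sum_take take_all)
  qed
  have pfg: "pf n g" unfolding g_def
    by (intro pf_mult pf_const pfS pfM pf_var pf_prod) (auto simp: nm)
  moreover have "prod_list us * sum_list us *
       (prod_list (map (\<lambda>(a,b). poc (lfloor a b)) (cut sh (V us))) * M (concat (map fst (cut sh (V us)))))
     = g us" if us: "length us = n" "\<forall>x\<in>set us. x \<noteq> 0" for us
  proof -
    have lv: "length (V us) = tot sh" using us tn by simp
    have PK: "(\<Prod>k\<in>K. d (V us) k) = (\<Prod>k\<in>K. us ! (n - Suc k))"
      using Km us nm by (intro prod.cong refl) (auto simp: V_d)
    have PKnz: "(\<Prod>k\<in>K. us ! (n - Suc k)) \<noteq> 0"
    proof -
      have "\<forall>k\<in>K. us ! (n - Suc k) \<noteq> 0" using us nm by (auto intro!: us(2)[rule_format] nth_mem)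
      then show ?thesis using finK by simp
    qed
    have pl: "prod_list us = us ! 0 * ((\<Prod>k\<in>{..<m}-K. us ! (n - Suc k)) * (\<Prod>k\<in>K. us ! (n - Suc k)))"
      using prod_list_rev_form[of us m] us nm prod.subset_diff[OF Km, of "\<lambda>k. us ! (n - Suc k)"] by simp
    show ?thesis
      unfolding pl idx2[rule_format, OF lv] K2[rule_format, OF lv] PK g_def
      by (rule alg_aux[OF PKnz])
  qed
  ultimately show ?thesis by blast
qed

theorem lemma33:
  fixes M :: mould
  assumes "M [] = 0"
    and "polynomial_valued M"
  shows "ARI_Delta (swap (ganit_bar poc M))"
proof -
  define F where "F ps = prod_list (map (\<lambda>(a,b). poc (lfloor a b)) ps) * M (concat (map fst ps))" for ps
  have A: "swap (ganit_bar poc M) us = (\<Sum>sh\<in>Sh (length us). F (cut sh (V us)))" for us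
  proof -
    have "swap (ganit_bar poc M) us = (\<Sum>ps\<in>decomps (V us). F ps)"
      by (simp add: swap_V ganit_bar_def F_def)
    also have "\<dots> = (\<Sum>sh\<in>Sh (length (V us)). F (cut sh (V us)))"
      unfolding decomps_eq by (subst sum.reindex[OF inj_cut]) simp
    finally show ?thesis by simp
  qed
  have Sh0: "Sh 0 = {}" unfolding Sh_def using length_le_tot by fastforce
  have "swap (ganit_bar poc M) [] = 0" unfolding A by (simp add: Sh0)
  moreover have "\<exists>c. is_poly_coeffs c \<and>
        (\<forall>us. length us = r \<and> (\<forall>x\<in>set us. x \<noteq> 0) \<and> sum_list us \<noteq> 0 \<longrightarrow>
           prod_list us * sum_list us * swap (ganit_bar poc M) us = poly_eval r c us)" for r
  proof -
    have "\<forall>sh\<in>Sh r. \<exists>g. pf r g \<and> (\<forall>us. length us = r \<and> (\<forall>x\<in>set us. x \<noteq> 0) \<longrightarrow>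
       prod_list us * sum_list us * F (cut sh (V us)) = g us)"
      using shape_term[OF assms(2)] unfolding F_def by blast
    then obtain G where G: "\<And>sh. sh \<in> Sh r \<Longrightarrow> pf r (G sh)"
      "\<And>sh us. sh \<in> Sh r \<Longrightarrow> length us = r \<Longrightarrow> (\<forall>x\<in>set us. x \<noteq> 0) \<Longrightarrow>
         prod_list us * sum_list us * F (cut sh (V us)) = G sh us"
      by metis
    have "pf r (\<lambda>us. \<Sum>sh\<in>Sh r. G sh us)" by (intro pf_sum finite_Sh G(1))
    then obtain c where c: "is_poly_coeffs c" "\<And>us. length us = r \<Longrightarrow> (\<Sum>sh\<in>Sh r. G sh us) = poly_eval r c us"
      unfolding pf_def by blast
    have "prod_list us * sum_list us * swap (ganit_bar poc M) us = poly_eval r c us"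
      if "length us = r" "\<forall>x\<in>set us. x \<noteq> 0" for us
    proof -
      have "prod_list us * sum_list us * swap (ganit_bar poc M) us
          = (\<Sum>sh\<in>Sh r. prod_list us * sum_list us * F (cut sh (V us)))"
        unfolding A that(1) by (simp add: sum_distrib_left)
      also have "\<dots> = (\<Sum>sh\<in>Sh r. G sh us)" using G(2) that by (intro sum.cong refl) auto
      finally show ?thesis using c(2) that(1) by simp
    qed
    then show ?thesis using c(1) by blast
  qed
  ultimately show ?thesis unfolding ARI_Delta_def by blast
qed

end
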